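(* Let $\bm{L}_t\in\mathbb{R}^{n_1\times n_1}$ be a diagonal matrix with positive diagonal entries. Let $\bm{X}_t,\bm{X}\in\mathbb{R}^{n_1\times n_2}$ be rank-$r$ matrices with compact SVDs $\bm{X}_t=\bm{U}_t\bm{\Sigma}_t\bm{V}_t^T$ and $\bm{X}=\bm{U}\bm{\Sigma}\bm{V}^T$ ($\bm{U}_t,\bm{U}\in\mathbb{R}^{n_1\times r}$ with orthonormal columns). Define $\widetilde{\bm{U}}_t=\bm{U}_t(\bm{U}_t^T\bm{L}_t^{1/4}\bm{U}_t)^{-1/2}$ and $\widetilde{\bm{U}}=\bm{U}(\bm{U}^T\bm{L}_t^{1/4}\bm{U})^{-1/2}$. Then $$\big\|\widetilde{\bm{U}}_t\widetilde{\bm{U}}_t^T\bm{L}_t^{1/4}-\widetilde{\bm{U}}\widetilde{\bm{U}}^T\bm{L}_t^{1/4}\big\|_{\bm{L}_t^{1/4}}\le\frac{\mathrm{cond}(\bm{L}_t^{3/8})}{\sigma_{\min}(\bm{X})}\,\|\bm{X}_t-\bm{X}\|_2.$$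
   Context: For symmetric positive definite $\bm{M}$, $\|\bm{x}\|_{\bm{M}}=\langle\bm{M}\bm{x},\bm{x}\rangle^{1/2}$ and for a square matrix $\bm{A}$, $\|\bm{A}\|_{\bm{M}}=\sup_{\bm{x}\neq0}\|\bm{A}\bm{x}\|_{\bm{M}}/\|\bm{x}\|_{\bm{M}}$. $\|\cdot\|_2$ is the spectral norm, $\sigma_{\min}(\bm{X})$ the smallest nonzero singular value of $\bm{X}$, and $\mathrm{cond}(\bm{Z})=\sigma_{\max}(\bm{Z})/\sigma_{\min}(\bm{Z})$. The columns of $\widetilde{\bm{U}}_t$, $\widetilde{\bm{U}}$ are orthonormal with respect to $\langle\bm{x},\bm{y}\rangle_{\bm{L}_t^{1/4}}=\langle\bm{L}_t^{1/4}\bm{x},\bm{y}\rangle$. In the paper $\bm{L}_t=\epsilon_t\bm{I}+\mathrm{diag}(\bm{G}_t\bm{G}_t^T)$, $\epsilon_t>0$. *)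

theory Defs
  imports "HOL-Analysis.Analysis"
begin

definition diag_powr :: "real^'n^'n \<Rightarrow> real \<Rightarrow> real^'n^'n" where
  "diag_powr L p = (\<chi> i j. if i = j then (L $ i $ i) powr p else 0)"

definition is_diagonal :: "real^'n^'n \<Rightarrow> bool" where
  "is_diagonal A \<longleftrightarrow> (\<forall>i j. i \<noteq> j \<longrightarrow> A $ i $ j = 0)"

definition sym_posdef :: "real^'n^'n \<Rightarrow> bool" where
  "sym_posdef A \<longleftrightarrow> transpose A = A \<and> (\<forall>x. x \<noteq> 0 \<longrightarrow> (A *v x) \<bullet> x > 0)"

definition inv_sqrt :: "real^'n^'n \<Rightarrow> real^'n^'n" where
  "inv_sqrt M = (THE S. sym_posdef S \<and> S ** S = matrix_inv M)"

definition vec_Mnorm :: "real^'n^'n \<Rightarrow> real^'n \<Rightarrow> real" where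
  "vec_Mnorm M x = sqrt ((M *v x) \<bullet> x)"

definition mat_Mnorm :: "real^'n^'n \<Rightarrow> real^'n^'n \<Rightarrow> real" where
  "mat_Mnorm M A = (SUP x\<in>{x. x \<noteq> 0}. vec_Mnorm M (A *v x) / vec_Mnorm M x)"

definition spec_norm :: "real^'n^'m \<Rightarrow> real" where
  "spec_norm A = onorm (\<lambda>x. A *v x)"

definition sing_vals :: "real^'n^'m \<Rightarrow> real set" where
  "sing_vals A = {sqrt e | e. e \<noteq> 0 \<and> (\<exists>v. v \<noteq> 0 \<and> (transpose A ** A) *v v = e *\<^sub>R v)}"

definition sigma_min :: "real^'n^'m \<Rightarrow> real" where
  "sigma_min A = Inf (sing_vals A)"

definition sigma_max :: "real^'n^'m \<Rightarrow> real" where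
  "sigma_max A = Sup (sing_vals A)"

definition cond :: "real^'n^'m \<Rightarrow> real" where
  "cond A = sigma_max A / sigma_min A"

end

theory Submission
  imports Defs
begin


lemma sym_dot:
  fixes A :: "real^'n^'n"
  assumes "transpose A = A"
  shows "(A *v x) \<bullet> y = x \<bullet> (A *v y)"
  by (metis assms dot_lmul_matrix transpose_matrix_vector)

lemma spec_step:
  fixes A :: "real^'n^'n" and E :: "(real^'n) set"
  assumes sym: "transpose A = A" and fin: "finite E"
    and eig: "\<forall>e\<in>E. \<exists>c. A *v e = c *\<^sub>R e"
    and cE: "card E < CARD('n)"
  shows "\<exists>v. norm v = 1 \<and> A *v v = ((A *v v) \<bullet> v) *\<^sub>R v \<and> (\<forall>e\<in>E. v \<bullet> e = 0)"
proof -
  define W where "W = (\<Inter>e\<in>E. {w::real^'n. e \<bullet> w = 0})"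
  have Wmem: "w \<in> W \<longleftrightarrow> (\<forall>e\<in>E. w \<bullet> e = 0)" for w
    by (auto simp: W_def inner_commute)
  have Wlin: "a *\<^sub>R x + b *\<^sub>R y \<in> W" if "x \<in> W" "y \<in> W" for a b x y
    using that by (simp add: Wmem inner_add_left)
  have WA: "A *v x \<in> W" if "x \<in> W" for x
  proof -
    have "(A *v x) \<bullet> e = 0" if "e \<in> E" for e
    proof -
      obtain c where "A *v e = c *\<^sub>R e" using eig \<open>e\<in>E\<close> by blast
      then show ?thesis using sym_dot[OF sym, of x e] \<open>x \<in> W\<close> \<open>e\<in>E\<close> by (simp add: Wmem)
    qed
    then show ?thesis by (simp add: Wmem)
  qed
  define K where "K = W \<inter> sphere 0 1"
  have "closed W" unfolding W_def by (intro closed_INT ballI closed_hyperplane)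
  then have cK: "compact K" unfolding K_def by (simp add: closed_Int_compact)
  have "dim E \<le> card E" using fin dim_le_card[of E E] span_superset[of E] by blast
  then have "dim E < DIM(real^'n)" using cE by simp
  then obtain x0 :: "real^'n" where x0: "x0 \<noteq> 0" "\<And>y. y \<in> span E \<Longrightarrow> orthogonal x0 y"
    using orthogonal_to_subspace_exists by blast
  have "(1/norm x0) *\<^sub>R x0 \<in> K"
    using x0 by (auto simp: K_def Wmem orthogonal_def span_base)
  then have neK: "K \<noteq> {}" by blast
  have "continuous_on K (\<lambda>x. (A *v x) \<bullet> x)" by (intro continuous_intros)
  then obtain v where vK: "v \<in> K" and vmax: "\<And>y. y \<in> K \<Longrightarrow> (A *v y) \<bullet> y \<le> (A *v v) \<bullet> v"
    using continuous_attains_sup[OF cK neK] by blast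
  define l where "l = (A *v v) \<bullet> v"
  have vW: "v \<in> W" and nv: "norm v = 1" using vK by (auto simp: K_def)
  have vv: "v \<bullet> v = 1" using nv by (simp add: dot_square_norm)
  have qle: "(A *v x) \<bullet> x \<le> l * (x \<bullet> x)" if "x \<in> W" for x
  proof (cases "x = 0")
    case True then show ?thesis by simp
  next
    case False
    define u where "u = (1/norm x) *\<^sub>R x"
    have "u \<in> K" using that False Wlin[of x x "1/norm x" 0] by (simp add: K_def u_def)
    then have "(A *v u) \<bullet> u \<le> l" using vmax l_def by blast
    moreover have "(A *v u) \<bullet> u = ((A *v x) \<bullet> x) / (norm x)^2"
      by (simp add: u_def matrix_vector_mult_scaleR power2_eq_square)
    moreover have "x \<bullet> x = (norm x)^2" by (simp add: dot_square_norm)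
    moreover have "norm x > 0" using False by simp
    ultimately show ?thesis by (simp add: divide_le_eq mult.commute)
  qed
  define w where "w = A *v v - l *\<^sub>R v"
  have wW: "w \<in> W" unfolding w_def using Wlin[OF WA[OF vW] vW, of 1 "-l"] by simp
  have wv: "w \<bullet> v = 0" unfolding w_def l_def using vv by (simp add: inner_diff_left)
  have Avw: "(A *v v) \<bullet> w = w \<bullet> w"
    unfolding w_def l_def using wv[unfolded w_def l_def] by (simp add: inner_diff_left inner_diff_right inner_commute)
  define c where "c = l * (w \<bullet> w) - (A *v w) \<bullet> w"
  have key: "2 * t * (w \<bullet> w) \<le> t^2 * c" for t
  proof -
    have "v + t *\<^sub>R w \<in> W" using Wlin[OF vW wW, of 1 t] by simp
    then have h1: "(A *v (v + t *\<^sub>R w)) \<bullet> (v + t *\<^sub>R w) \<le> l * ((v + t *\<^sub>R w) \<bullet> (v + t *\<^sub>R w))"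
      by (rule qle)
    have h2: "(A *v (v + t *\<^sub>R w)) \<bullet> (v + t *\<^sub>R w) = l + 2 * t * (w \<bullet> w) + t^2 * ((A *v w) \<bullet> w)"
    proof -
      have "(A *v w) \<bullet> v = w \<bullet> w" using sym_dot[OF sym, of w v] Avw by (simp add: inner_commute)
      then show ?thesis using Avw
        by (simp add: matrix_vector_right_distrib matrix_vector_mult_scaleR
            inner_add_left inner_add_right l_def power2_eq_square algebra_simps)
    qed
    have h3: "(v + t *\<^sub>R w) \<bullet> (v + t *\<^sub>R w) = 1 + t^2 * (w \<bullet> w)"
      using vv wv by (simp add: inner_add_left inner_add_right inner_commute power2_eq_square)
    have "l + 2 * t * (w \<bullet> w) + t^2 * ((A *v w) \<bullet> w) \<le> l * (1 + t^2 * (w \<bullet> w))"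
      using h1 unfolding h2 h3 .
    then show ?thesis unfolding c_def by (simp add: algebra_simps)
  qed
  have "w \<bullet> w = 0"
  proof (rule ccontr)
    assume "w \<bullet> w \<noteq> 0"
    then have p: "w \<bullet> w > 0" by (simp add: order_le_neq_trans)
    define t where "t = (w \<bullet> w) / (\<bar>c\<bar> + 1)"
    have tp: "t > 0" using p by (simp add: t_def)
    have "2 * t * (w \<bullet> w) \<le> t^2 * c" by (rule key)
    then have "2 * (w \<bullet> w) \<le> t * c" using tp by (simp add: power2_eq_square)
    also have "t * c \<le> t * \<bar>c\<bar>" using tp by simp
    also have "t * \<bar>c\<bar> < w \<bullet> w" using p by (simp add: t_def field_simps)
    finally show False using p by simp
  qed
  then have "w = 0" by simp
  then have "A *v v = l *\<^sub>R v" by (simp add: w_def)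
  then show ?thesis using nv vW by (auto simp: Wmem l_def)
qed


lemma sum_mat_vec: "finite E \<Longrightarrow> (\<Sum>e\<in>E. B e) *v x = (\<Sum>e\<in>E. B e *v x)"
  by (induction E rule: finite_induct) (auto simp: matrix_vector_mult_add_rdistrib)

lemma mat_vec_sum: "finite E \<Longrightarrow> (A::real^'n^'m) *v (\<Sum>e\<in>E. f e) = (\<Sum>e\<in>E. A *v f e)"
  by (induction E rule: finite_induct) (auto simp: matrix_vector_right_distrib)

lemma scaleR_mat_vec: "((c::real) *\<^sub>R (B::real^'n^'m)) *v x = c *\<^sub>R (B *v x)"
  by (simp add: vec_eq_iff matrix_vector_mult_def sum_distrib_left mult_ac)

definition outer :: "real^'n \<Rightarrow> real^'n^'n" where
  "outer e = (\<chi> i j. e$i * e$j)"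

lemma outer_vec: "outer e *v x = (e \<bullet> x) *\<^sub>R e"
  by (simp add: outer_def vec_eq_iff matrix_vector_mult_def inner_vec_def sum_distrib_left sum_distrib_right mult_ac)

definition ONS :: "(real^'n) set \<Rightarrow> bool" where
  "ONS E \<longleftrightarrow> finite E \<and> pairwise orthogonal E \<and> (\<forall>e\<in>E. norm e = 1)"

lemma ONS_coef:
  assumes "ONS E" "f \<in> E"
  shows "f \<bullet> (\<Sum>e\<in>E. a e *\<^sub>R e) = a f"
proof -
  have fin: "finite E" using assms by (simp add: ONS_def)
  have "f \<bullet> (\<Sum>e\<in>E. a e *\<^sub>R e) = (\<Sum>e\<in>E. a e * (f \<bullet> e))" by (simp add: inner_sum_right)
  also have "\<dots> = a f * (f \<bullet> f) + (\<Sum>e\<in>E-{f}. a e * (f \<bullet> e))"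
    using sum.remove[OF fin assms(2)] by simp
  also have "(\<Sum>e\<in>E-{f}. a e * (f \<bullet> e)) = 0"
    using assms by (intro sum.neutral) (auto simp: ONS_def pairwise_def orthogonal_def)
  also have "f \<bullet> f = 1" using assms by (simp add: ONS_def dot_square_norm)
  finally show ?thesis by simp
qed

lemma spectral_k:
  fixes A :: "real^'n^'n"
  assumes sym: "transpose A = A"
  shows "k \<le> CARD('n) \<Longrightarrow> \<exists>E. ONS E \<and> card E = k \<and> (\<forall>e\<in>E. A *v e = ((A *v e) \<bullet> e) *\<^sub>R e)"
proof (induction k)
  case 0
  show ?case by (rule exI[of _ "{}"]) (simp add: ONS_def)
next
  case (Suc k)
  then obtain E where E: "ONS E" "card E = k" "\<forall>e\<in>E. A *v e = ((A *v e) \<bullet> e) *\<^sub>R e" by auto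
  have fin: "finite E" using E by (simp add: ONS_def)
  have "\<forall>e\<in>E. \<exists>c. A *v e = c *\<^sub>R e" using E(3) by blast
  then obtain v where v: "norm v = 1" "A *v v = ((A *v v) \<bullet> v) *\<^sub>R v" "\<forall>e\<in>E. v \<bullet> e = 0"
    using spec_step[OF sym fin] E(2) Suc.prems by auto
  have vE: "v \<notin> E" using v by (auto simp: dot_square_norm[symmetric])
  have "ONS (insert v E)"
    using E(1) v unfolding ONS_def pairwise_insert
    by (auto simp: orthogonal_def inner_commute)
  moreover have "card (insert v E) = Suc k" using fin vE E(2) by simp
  ultimately show ?case using E(3) v(2) by blast
qed

lemma ONS_expand:
  fixes E :: "(real^'n) set"
  assumes "ONS E" "card E = CARD('n)"
  shows "x = (\<Sum>e\<in>E. (e \<bullet> x) *\<^sub>R e)"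
proof -
  have ind: "independent E"
    using assms(1) by (intro pairwise_orthogonal_independent) (auto simp: ONS_def)
  have sp: "UNIV \<subseteq> span E"
    by (rule card_ge_dim_independent) (simp_all add: ind assms(2))
  define y where "y = x - (\<Sum>e\<in>E. (e \<bullet> x) *\<^sub>R e)"
  have oy: "orthogonal y f" if "f \<in> E" for f
    using ONS_coef[OF assms(1) that, of "\<lambda>e. e \<bullet> x"] that
    by (simp add: y_def orthogonal_def inner_diff_right inner_commute)
  have "orthogonal y y" by (rule orthogonal_to_span[OF _ oy]) (use sp in blast)
  then have "y = 0" by (simp add: orthogonal_self)
  then show ?thesis unfolding y_def by (rule right_minus_eq[THEN iffD1])
qed

lemma spectral:
  fixes A :: "real^'n^'n"
  assumes sym: "transpose A = A"
  shows "\<exists>E. ONS E \<and> card E = CARD('n) \<and> (\<forall>e\<in>E. A *v e = ((A *v e) \<bullet> e) *\<^sub>R e)"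
  using spectral_k[OF sym] by blast

lemma sym_from_dot:
  fixes A :: "real^'n^'n"
  assumes "\<And>x y. (A *v x) \<bullet> y = x \<bullet> (A *v y)"
  shows "transpose A = A"
proof -
  have "transpose A *v x = A *v x" for x
  proof -
    define d where "d = transpose A *v x - A *v x"
    have "d \<bullet> d = (transpose A *v x) \<bullet> d - (A *v x) \<bullet> d"
      unfolding d_def by (rule inner_diff_left)
    also have "(transpose A *v x) \<bullet> d = x \<bullet> (A *v d)"
      using dot_lmul_matrix[of x A d] by simp
    also have "(A *v x) \<bullet> d = x \<bullet> (A *v d)" by (rule assms)
    finally have "d \<bullet> d = 0" by simp
    then show ?thesis by (simp add: d_def)
  qed
  then show ?thesis by (simp add: matrix_eq)
qed

lemma inv_unique:
  fixes A B :: "real^'n^'n"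
  assumes "A ** B = mat 1"
  shows "matrix_inv A = B"
proof -
  have BA: "B ** A = mat 1" using assms matrix_left_right_inverse by blast
  have ex: "\<exists>A'. A ** A' = mat 1 \<and> A' ** A = mat 1" using assms BA by blast
  define C where "C = matrix_inv A"
  have C: "A ** C = mat 1 \<and> C ** A = mat 1"
    unfolding C_def matrix_inv_def using someI_ex[OF ex] by simp
  have "C = C ** (A ** B)" using assms by simp
  also have "\<dots> = B" using C by (simp add: matrix_mul_assoc)
  finally show ?thesis by (simp add: C_def)
qed

lemma sqrt_exists:
  fixes G :: "real^'n^'n"
  assumes G: "sym_posdef G"
  shows "\<exists>S. sym_posdef S \<and> S ** S = matrix_inv G"
proof -
  have symG: "transpose G = G" using G by (simp add: sym_posdef_def)
  obtain E where E: "ONS E" "card E = CARD('n)" "\<forall>e\<in>E. G *v e = ((G *v e) \<bullet> e) *\<^sub>R e"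
    using spectral[OF symG] by blast
  have fin: "finite E" using E by (simp add: ONS_def)
  define lam where "lam e = (G *v e) \<bullet> e" for e
  have lpos: "lam e > 0" if "e \<in> E" for e
  proof -
    have "e \<noteq> 0" using E(1) that by (auto simp: ONS_def)
    then show ?thesis using G by (simp add: sym_posdef_def lam_def)
  qed
  define c where "c e = lam e powr (-1/2)" for e
  have cpos: "c e > 0" if "e \<in> E" for e using lpos[OF that] by (simp add: c_def)
  have cc: "c e * c e * lam e = 1" if "e \<in> E" for e
  proof -
    have "c e * c e = lam e powr (-1)" unfolding c_def by (simp add: powr_add[symmetric])
    then show ?thesis using lpos[OF that] by (simp add: powr_minus_divide)
  qed
  define S where "S = (\<Sum>e\<in>E. c e *\<^sub>R outer e)"
  have Sx: "S *v x = (\<Sum>e\<in>E. (c e * (e \<bullet> x)) *\<^sub>R e)" for x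
  proof -
    have "S *v x = (\<Sum>e\<in>E. (c e *\<^sub>R outer e) *v x)" unfolding S_def by (rule sum_mat_vec[OF fin])
    also have "\<dots> = (\<Sum>e\<in>E. (c e * (e \<bullet> x)) *\<^sub>R e)"
      by (rule sum.cong) (simp_all add: scaleR_mat_vec outer_vec)
    finally show ?thesis .
  qed
  have eS: "e \<bullet> (S *v x) = c e * (e \<bullet> x)" if "e \<in> E" for e x
    unfolding Sx by (rule ONS_coef[OF E(1) that])
  have SSx: "S *v (S *v x) = (\<Sum>e\<in>E. (c e * c e * (e \<bullet> x)) *\<^sub>R e)" for x
    unfolding Sx[of "S *v x"] by (rule sum.cong) (simp_all add: eS mult.assoc)
  have GSS: "G *v (S *v (S *v x)) = x" for x
  proof -
    have "G *v (S *v (S *v x)) = (\<Sum>e\<in>E. G *v ((c e * c e * (e \<bullet> x)) *\<^sub>R e))"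
      unfolding SSx by (rule mat_vec_sum[OF fin])
    also have "\<dots> = (\<Sum>e\<in>E. (e \<bullet> x) *\<^sub>R e)"
    proof (rule sum.cong)
      fix e assume e: "e \<in> E"
      have "G *v ((c e * c e * (e \<bullet> x)) *\<^sub>R e) = (c e * c e * (e \<bullet> x)) *\<^sub>R (lam e *\<^sub>R e)"
        using E(3) e by (simp add: matrix_vector_mult_scaleR lam_def)
      also have "\<dots> = ((c e * c e * lam e) * (e \<bullet> x)) *\<^sub>R e" by (simp add: mult_ac)
      finally show "G *v ((c e * c e * (e \<bullet> x)) *\<^sub>R e) = (e \<bullet> x) *\<^sub>R e" using cc[OF e] by simp
    qed simp
    also have "\<dots> = x" by (rule ONS_expand[OF E(1,2), symmetric])
    finally show ?thesis .
  qed
  have GSS': "G ** (S ** S) = mat 1"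
    unfolding matrix_eq using GSS by (simp add: matrix_vector_mul_assoc[symmetric])
  have Sdot: "(S *v x) \<bullet> y = (\<Sum>e\<in>E. c e * (e \<bullet> x) * (e \<bullet> y))" for x y
    unfolding Sx by (simp add: inner_sum_left mult.assoc)
  have symS: "transpose S = S"
  proof (rule sym_from_dot)
    fix x y
    have "x \<bullet> (S *v y) = (S *v y) \<bullet> x" by (rule inner_commute)
    then show "(S *v x) \<bullet> y = x \<bullet> (S *v y)" by (simp add: Sdot mult_ac)
  qed
  have pdS: "(S *v x) \<bullet> x > 0" if "x \<noteq> 0" for x
  proof -
    have "\<exists>e\<in>E. e \<bullet> x \<noteq> 0"
    proof (rule ccontr)
      assume nx: "\<not> (\<exists>e\<in>E. e \<bullet> x \<noteq> 0)"
      have "x = (\<Sum>e\<in>E. (e \<bullet> x) *\<^sub>R e)" by (rule ONS_expand[OF E(1,2)])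
      also have "\<dots> = 0" using nx by simp
      finally show False using that by simp
    qed
    then obtain e where e: "e \<in> E" "e \<bullet> x \<noteq> 0" by blast
    have "0 < (\<Sum>e\<in>E. c e * (e \<bullet> x)^2)"
      apply (rule sum_pos2[OF fin e(1)])
      subgoal using mult_pos_pos[OF cpos[OF e(1)], of "(e \<bullet> x)^2"] e(2) by simp
      subgoal for i using mult_nonneg_nonneg[of "c i" "(i \<bullet> x)^2"] cpos[of i] by simp
      done
    then show ?thesis by (simp add: Sdot power2_eq_square mult.assoc)
  qed
  have "sym_posdef S" using symS pdS by (simp add: sym_posdef_def)
  moreover have "S ** S = matrix_inv G" using inv_unique[OF GSS'] by simp
  ultimately show ?thesis by (intro exI[of _ S] conjI)
qed


lemma trace_form:
  fixes D S :: "real^'n^'n"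
  assumes symD: "transpose D = D"
  shows "trace (D ** S ** D) = (\<Sum>i\<in>UNIV. (S *v (D$i)) \<bullet> (D$i))"
proof -
  have Dsym: "D$k$i = D$i$k" for i k using symD by (metis transpose_def vec_lambda_beta)
  have "trace (D ** S ** D) = (\<Sum>i\<in>UNIV. \<Sum>k\<in>UNIV. \<Sum>j\<in>UNIV. D$i$j * S$j$k * D$i$k)"
    unfolding trace_def matrix_matrix_mult_def by (simp add: sum_distrib_right Dsym)
  also have "\<dots> = (\<Sum>i\<in>UNIV. \<Sum>j\<in>UNIV. \<Sum>k\<in>UNIV. D$i$j * S$j$k * D$i$k)"
    by (rule sum.cong[OF refl], rule sum.swap)
  also have "\<dots> = (\<Sum>i\<in>UNIV. (S *v (D$i)) \<bullet> (D$i))"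
    unfolding matrix_vector_mult_def inner_vec_def by (simp add: sum_distrib_right sum_distrib_left mult_ac)
  finally show ?thesis .
qed

lemma neg_mat_vec: "(- (A::real^'n^'m)) *v x = - (A *v x)"
  by (simp add: vec_eq_iff matrix_vector_mult_def sum_negf)

lemma trace_neg: "trace (- (A::real^'n^'n)) = - trace A"
  by (simp add: trace_def sum_negf)

lemma sqrt_unique:
  fixes S T :: "real^'n^'n"
  assumes S: "sym_posdef S" and T: "sym_posdef T" and ST: "S ** S = T ** T"
  shows "S = T"
proof -
  define D where "D = S - T"
  have symS: "transpose S = S" and symT: "transpose T = T" using S T by (auto simp: sym_posdef_def)
  have symD: "transpose D = D"
    using symS symT unfolding D_def by (simp add: vec_eq_iff transpose_def)
  have SSx: "S *v (S *v x) = T *v (T *v x)" for x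
    by (simp add: matrix_vector_mul_assoc ST)
  have SD: "S ** D = - (D ** T)"
  proof -
    have "(S ** D) *v x = (- (D ** T)) *v x" for x
    proof -
      have "(S ** D) *v x = S *v (S *v x) - S *v (T *v x)"
        by (simp add: D_def matrix_vector_mul_assoc[symmetric] matrix_vector_mult_diff_rdistrib matrix_vector_mult_diff_distrib)
      moreover have "(- (D ** T)) *v x = - (S *v (T *v x) - T *v (T *v x))"
        by (simp add: neg_mat_vec D_def matrix_vector_mul_assoc[symmetric] matrix_vector_mult_diff_rdistrib)
      ultimately show ?thesis using SSx[of x] by simp
    qed
    then show ?thesis by (simp add: matrix_eq)
  qed
  have t1: "trace (D ** S ** D) = - trace (D ** T ** D)"
  proof -
    have "D ** S ** D = - (D ** D ** T)"
      by (simp add: matrix_mul_assoc[symmetric] SD) (simp add: vec_eq_iff matrix_matrix_mult_def sum_negf)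
    then have "trace (D ** S ** D) = - trace (D ** D ** T)" by (simp add: trace_neg)
    also have "trace (D ** D ** T) = trace (D ** T ** D)"
      by (metis matrix_mul_assoc trace_mul_sym)
    finally show ?thesis .
  qed
  have nnS: "0 \<le> (S *v v) \<bullet> v" for v using S unfolding sym_posdef_def
    by (cases "v = 0") (auto intro: less_imp_le)
  have nnT: "0 \<le> (T *v v) \<bullet> v" for v using T unfolding sym_posdef_def
    by (cases "v = 0") (auto intro: less_imp_le)
  have a: "0 \<le> trace (D ** S ** D)" unfolding trace_form[OF symD] by (rule sum_nonneg) (rule nnS)
  have b: "0 \<le> trace (D ** T ** D)" unfolding trace_form[OF symD] by (rule sum_nonneg) (rule nnT)
  have "(\<Sum>i\<in>UNIV. (S *v (D$i)) \<bullet> (D$i)) = 0"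
    using a b t1 unfolding trace_form[OF symD] by linarith
  then have "\<forall>i\<in>UNIV. (S *v (D$i)) \<bullet> (D$i) = 0"
    using sum_nonneg_eq_0_iff[of UNIV "\<lambda>i. (S *v (D$i)) \<bullet> (D$i)"] nnS by simp
  then have "D$i = 0" for i using S unfolding sym_posdef_def
    by (metis UNIV_I less_irrefl)
  then have "D = 0" by (simp add: vec_eq_iff)
  then show ?thesis by (simp add: D_def)
qed

lemma inv_sqrt_prop:
  fixes G :: "real^'n^'n"
  assumes "sym_posdef G"
  shows "sym_posdef (inv_sqrt G) \<and> inv_sqrt G ** inv_sqrt G = matrix_inv G"
proof -
  have "\<exists>!S. sym_posdef S \<and> S ** S = matrix_inv G"
    using sqrt_exists[OF assms] sqrt_unique by metis
  then show ?thesis unfolding inv_sqrt_def by (rule theI')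
qed


lemma subspace_range_mat: "subspace (range (\<lambda>x. (A::real^'n^'m) *v x))"
  unfolding subspace_def
  by (auto simp: image_iff intro: exI[of _ 0] simp flip: matrix_vector_right_distrib matrix_vector_mult_scaleR)

lemma dim_range_mat:
  fixes W :: "real^'r^'n"
  assumes "transpose W ** W = mat 1"
  shows "dim (range (\<lambda>x. W *v x)) = CARD('r)"
proof -
  have inj: "inj_on (\<lambda>x. W *v x) (span UNIV)"
    by (rule inj_onI) (metis assms matrix_vector_mul_assoc matrix_vector_mul_lid)
  have "dim ((\<lambda>x. W *v x) ` UNIV) = dim (UNIV :: (real^'r) set)"
    by (rule dim_image_eq[OF matrix_vector_mul_linear inj])
  then show ?thesis by simp
qed

lemma main_abstract:
  fixes R P Pt :: "real^'n^'n" and kappa :: real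
  assumes Rinj: "\<And>x. R *v x = 0 \<Longrightarrow> x = 0"
    and Pid: "\<And>x. P *v (P *v x) = P *v x"
    and Ptid: "\<And>x. Pt *v (Pt *v x) = Pt *v x"
    and Psa: "\<And>x y. (R *v (P *v x)) \<bullet> (R *v y) = (R *v x) \<bullet> (R *v (P *v y))"
    and Ptsa: "\<And>x y. (R *v (Pt *v x)) \<bullet> (R *v y) = (R *v x) \<bullet> (R *v (Pt *v y))"
    and dims: "dim (range (\<lambda>x. P *v x)) = dim (range (\<lambda>x. Pt *v x))"
    and kpos: "kappa \<ge> 0"
    and beta: "\<And>z. norm (R *v (P *v z - Pt *v (P *v z))) \<le> kappa * norm (R *v (P *v z))"
  shows "norm (R *v (Pt *v x - P *v x)) \<le> kappa * norm (R *v x)"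
proof -
  define nM where "nM x = norm (R *v x)" for x
  define ip where "ip x y = (R *v x) \<bullet> (R *v y)" for x y
  have nM_sq: "(nM x)^2 = ip x x" for x by (simp add: nM_def ip_def power2_norm_eq_inner)
  have ip_sym: "ip x y = ip y x" for x y by (simp add: ip_def inner_commute)
  have ip_diff_l: "ip (x - y) z = ip x z - ip y z" for x y z
    by (simp add: ip_def matrix_vector_mult_diff_distrib inner_diff_left)
  have ip_diff_r: "ip z (x - y) = ip z x - ip z y" for x y z
    by (simp add: ip_def matrix_vector_mult_diff_distrib inner_diff_right)
  have ip_add_l: "ip (x + y) z = ip x z + ip y z" for x y z
    by (simp add: ip_def matrix_vector_right_distrib inner_add_left)
  have CS: "ip x y \<le> nM x * nM y" for x y unfolding ip_def nM_def by (rule norm_cauchy_schwarz)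
  have nM0: "nM x = 0 \<Longrightarrow> x = 0" for x using Rinj by (simp add: nM_def)
  have nMnn: "nM x \<ge> 0" for x by (simp add: nM_def)
  have Psa': "ip (P *v x) y = ip x (P *v y)" for x y using Psa by (simp add: ip_def)
  have Ptsa': "ip (Pt *v x) y = ip x (Pt *v y)" for x y using Ptsa by (simp add: ip_def)
  have Porth: "ip (P *v x) (y - P *v y) = 0" for x y
    by (simp add: Psa' ip_diff_r Pid matrix_vector_mult_diff_distrib)
  have Ptorth: "ip (Pt *v x) (y - Pt *v y) = 0" for x y
    by (simp add: Ptsa' ip_diff_r Ptid matrix_vector_mult_diff_distrib)
  have pyth: "(nM x)^2 = (nM (Q *v x))^2 + (nM (x - Q *v x))^2"
    if "\<And>y. ip (Q *v x) (y - Q *v y) = 0" for Q x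
  proof -
    have sq: "(a + b) \<bullet> (a + b) = a \<bullet> a + 2 * (a \<bullet> b) + b \<bullet> b" for a b :: "real^'n"
      by (simp add: inner_add_left inner_add_right inner_commute[of b a])
    have "R *v x = R *v (Q *v x) + R *v (x - Q *v x)" by (simp flip: matrix_vector_right_distrib)
    then have "ip x x = ip (Q *v x) (Q *v x) + 2 * ip (Q *v x) (x - Q *v x) + ip (x - Q *v x) (x - Q *v x)"
      unfolding ip_def by (simp only: sq)
    then show ?thesis using that[of x] by (simp add: nM_sq)
  qed
  have pythP: "(nM x)^2 = (nM (P *v x))^2 + (nM (x - P *v x))^2" for x
    by (rule pyth) (rule Porth)
  have pythPt: "(nM x)^2 = (nM (Pt *v x))^2 + (nM (x - Pt *v x))^2" for x
    by (rule pyth) (rule Ptorth)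
  have sqle: "a \<le> b" if "a^2 \<le> b^2" "b \<ge> 0" for a b :: real
    using that by (rule power2_le_imp_le)
  have Ptc: "nM (Pt *v x) \<le> nM x" for x
  proof (rule sqle)
    show "(nM (Pt *v x))^2 \<le> (nM x)^2"
      using pythPt[of x] zero_le_power2[of "nM (x - Pt *v x)"] by linarith
  qed (rule nMnn)
  define RU where "RU = range (\<lambda>x. P *v x)"
  define Rt where "Rt = range (\<lambda>x. Pt *v x)"
  have betaU: "nM (z - Pt *v z) \<le> kappa * nM z" if zU: "z \<in> RU" for z
  proof -
    obtain y where "z = P *v y" using zU by (auto simp: RU_def)
    then show ?thesis using beta[of y] by (simp add: nM_def)
  qed
  have alpha: "nM (Pt *v a) \<le> kappa * nM a" if ax: "a = x - P *v x" for a x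
  proof (cases "kappa \<ge> 1")
    case True
    have "nM a \<le> kappa * nM a" using mult_right_mono[OF True nMnn[of a]] by simp
    then show ?thesis using Ptc[of a] by linarith
  next
    case False
    then have k1: "kappa < 1" by simp
    have k2: "kappa^2 < 1" using power_strict_mono[OF k1 kpos, of 2] by simp
    have low: "(1 - kappa^2) * (nM z)^2 \<le> (nM (Pt *v z))^2" if zU: "z \<in> RU" for z
    proof -
      have "(nM (z - Pt *v z))^2 \<le> (kappa * nM z)^2"
        by (rule power_mono[OF betaU[OF zU] nMnn])
      moreover have "(kappa * nM z)^2 = kappa^2 * (nM z)^2" by (rule power_mult_distrib)
      moreover have "(1 - kappa^2) * (nM z)^2 = (nM z)^2 - kappa^2 * (nM z)^2" by algebra
      ultimately show ?thesis using pythPt[of z] by linarith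
    qed
    have sRU: "subspace RU" unfolding RU_def by (rule subspace_range_mat)
    have sRt: "subspace Rt" unfolding Rt_def by (rule subspace_range_mat)
    have inj: "inj_on (\<lambda>x. Pt *v x) RU"
    proof (rule inj_onI)
      fix y1 y2 assume y: "y1 \<in> RU" "y2 \<in> RU" "Pt *v y1 = Pt *v y2"
      have d: "y1 - y2 \<in> RU" using sRU y by (simp add: subspace_diff)
      have "Pt *v (y1 - y2) = 0" using y(3) by (simp add: matrix_vector_mult_diff_distrib)
      then have "(1 - kappa^2) * (nM (y1 - y2))^2 \<le> 0" using low[OF d] by (simp add: nM_def)
      moreover have "1 - kappa^2 > 0" using k2 by simp
      ultimately have "(nM (y1 - y2))^2 \<le> 0" by (simp add: mult_le_0_iff)
      then have "nM (y1 - y2) = 0" by simp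
      then have "y1 - y2 = 0" by (rule nM0)
      then show "y1 = y2" by simp
    qed
    have img: "(\<lambda>x. Pt *v x) ` RU = range (\<lambda>x. (Pt ** P) *v x)"
      unfolding RU_def by (auto simp: matrix_vector_mul_assoc[symmetric] image_iff)
    have surj: "(\<lambda>x. Pt *v x) ` RU = Rt"
    proof (rule subspace_dim_equal)
      show "subspace ((\<lambda>x. Pt *v x) ` RU)" unfolding img by (rule subspace_range_mat)
      show "subspace Rt" by (rule sRt)
      show "(\<lambda>x. Pt *v x) ` RU \<subseteq> Rt" by (auto simp: Rt_def)
      have spRU: "span RU = RU" using sRU by (simp add: span_eq_iff)
      have "dim ((\<lambda>x. Pt *v x) ` RU) = dim RU"
        by (rule dim_image_eq[OF matrix_vector_mul_linear, of Pt RU, unfolded spRU, OF inj])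
      then show "dim Rt \<le> dim ((\<lambda>x. Pt *v x) ` RU)" using dims by (simp add: RU_def Rt_def)
    qed
    have ubound: "nM (u - P *v u) \<le> kappa * nM u" if uR: "u \<in> Rt" for u
    proof -
      obtain z where z: "z \<in> RU" "u = Pt *v z" using surj uR by blast
      obtain y where y: "z = P *v y" using z(1) by (auto simp: RU_def)
      have Pz: "P *v z = z" using y Pid by simp
      have "ip (P *v u) z = ip u (P *v z)" by (rule Psa')
      also have "\<dots> = ip u z" by (simp only: Pz)
      also have "ip u z = ip (Pt *v z) (Pt *v z)"
      proof -
        have "ip (Pt *v z) (z - Pt *v z) = 0" by (rule Ptorth)
        then show ?thesis unfolding z(2) ip_diff_r by simp
      qed
      also have "\<dots> = (nM u)^2" by (simp only: nM_sq z(2))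
      finally have e: "ip (P *v u) z = (nM u)^2" .
      have d: "(nM u)^2 \<le> nM (P *v u) * nM z" using CS[of "P *v u" z] e by simp
      have A: "((nM u)^2)^2 \<le> (nM (P *v u))^2 * (nM z)^2"
        using power_mono[OF d, of 2] by (simp add: power_mult_distrib)
      have B: "(1 - kappa^2) * (nM z)^2 \<le> (nM u)^2" using low[OF z(1)] z(2) by simp
      have C: "(1 - kappa^2) * (nM u)^2 \<le> (nM (P *v u))^2"
      proof (cases "nM u = 0")
        case True then show ?thesis by simp
      next
        case False
        then have up: "(nM u)^2 > 0" by simp
        have k3: "1 - kappa^2 \<ge> 0" using k2 by simp
        have "((1 - kappa^2) * (nM u)^2) * (nM u)^2 = (1 - kappa^2) * ((nM u)^2)^2"
          by (simp add: power2_eq_square)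
        also have "\<dots> \<le> (1 - kappa^2) * ((nM (P *v u))^2 * (nM z)^2)"
          by (rule mult_left_mono[OF A k3])
        also have "\<dots> = (nM (P *v u))^2 * ((1 - kappa^2) * (nM z)^2)" by simp
        also have "\<dots> \<le> (nM (P *v u))^2 * (nM u)^2"
          by (rule mult_left_mono[OF B]) simp
        finally show ?thesis using up by simp
      qed
      have "(nM (u - P *v u))^2 \<le> (kappa * nM u)^2"
      proof -
        have "(kappa * nM u)^2 = kappa^2 * (nM u)^2" by (rule power_mult_distrib)
        moreover have "(1 - kappa^2) * (nM u)^2 = (nM u)^2 - kappa^2 * (nM u)^2" by algebra
        ultimately show ?thesis using pythP[of u] C by linarith
      qed
      then show ?thesis by (rule sqle) (simp add: kpos nMnn)
    qed
    define u where "u = Pt *v a"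
    have "(nM u)^2 = ip (Pt *v a) u" by (simp only: u_def nM_sq)
    also have "\<dots> = ip a (Pt *v u)" by (rule Ptsa')
    also have "Pt *v u = u" by (simp only: u_def Ptid)
    also have "ip a u = ip a (u - P *v u)"
    proof -
      have "ip (P *v u) (x - P *v x) = 0" by (rule Porth)
      then have "ip a (P *v u) = 0" using ax ip_sym by metis
      then show ?thesis by (simp add: ip_diff_r)
    qed
    also have "\<dots> \<le> nM a * nM (u - P *v u)" by (rule CS)
    also have "\<dots> \<le> nM a * (kappa * nM u)"
      by (rule mult_left_mono[OF ubound nMnn]) (simp add: Rt_def u_def)
    finally have f: "(nM u)^2 \<le> nM a * (kappa * nM u)" .
    have "nM u \<le> kappa * nM a"
    proof (cases "nM u = 0")
      case True then show ?thesis using kpos nMnn[of a] by simp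
    next
      case False
      then have "nM u > 0" using nMnn[of u] by simp
      moreover have "nM u * nM u \<le> (kappa * nM a) * nM u" using f by (simp add: power2_eq_square mult_ac)
      ultimately show ?thesis by simp
    qed
    then show ?thesis by (simp add: u_def)
  qed
  define a where "a = x - P *v x"
  define b where "b = P *v x"
  have dec: "Pt *v x - P *v x = Pt *v a - (b - Pt *v b)"
  proof -
    have "x = a + b" by (simp add: a_def b_def)
    then have "Pt *v x = Pt *v a + Pt *v b" by (metis matrix_vector_right_distrib)
    then show ?thesis by (simp add: b_def)
  qed
  have o: "ip (Pt *v a) (b - Pt *v b) = 0" by (rule Ptorth)
  have sq2: "(c - d) \<bullet> (c - d) = c \<bullet> c - 2 * (c \<bullet> d) + d \<bullet> d" for c d :: "real^'n"
    by (simp add: inner_diff_left inner_diff_right inner_commute[of d c])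
  have "(nM (Pt *v a - (b - Pt *v b)))^2 = (nM (Pt *v a))^2 + (nM (b - Pt *v b))^2"
  proof -
    have "R *v (Pt *v a - (b - Pt *v b)) = R *v (Pt *v a) - R *v (b - Pt *v b)"
      by (rule matrix_vector_mult_diff_distrib)
    then show ?thesis using o unfolding nM_sq ip_def by (simp only: sq2)
  qed
  also have "\<dots> \<le> (kappa * nM a)^2 + (kappa * nM b)^2"
  proof -
    have "b \<in> RU" by (simp add: b_def RU_def)
    then have "nM (b - Pt *v b) \<le> kappa * nM b" by (rule betaU)
    then have 1: "(nM (b - Pt *v b))^2 \<le> (kappa * nM b)^2" by (rule power_mono[OF _ nMnn])
    have 2: "(nM (Pt *v a))^2 \<le> (kappa * nM a)^2"
      by (rule power_mono[OF alpha[OF a_def] nMnn])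
    show ?thesis using 1 2 by linarith
  qed
  also have "\<dots> = (kappa * nM x)^2"
    using pythP[of x] by (simp add: a_def b_def power_mult_distrib algebra_simps)
  finally have "(nM (Pt *v x - P *v x))^2 \<le> (kappa * nM x)^2" by (simp only: dec)
  then have "nM (Pt *v x - P *v x) \<le> kappa * nM x" by (rule sqle) (simp add: kpos nMnn)
  then show ?thesis by (simp add: nM_def)
qed


lemma dot_transpose: "((A::real^'n^'m) *v a) \<bullet> b = a \<bullet> (transpose A *v b)"
  by (metis dot_lmul_matrix vector_transpose_matrix)

lemma diag_powr_vec: "diag_powr L p *v x = (\<chi> i. (L$i$i) powr p * x$i)"
proof -
  have "(\<Sum>j\<in>UNIV. (if i = j then L$i$i powr p else 0) * x$j) = L$i$i powr p * x$i" for i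
    by (simp add: if_distrib[of "\<lambda>t. t * _"] cong: if_cong)
  then show ?thesis by (simp add: diag_powr_def matrix_vector_mult_def vec_eq_iff)
qed

lemma diag_powr_transpose: "transpose (diag_powr L p) = diag_powr L p"
  by (simp add: diag_powr_def transpose_def vec_eq_iff)

lemma diag_powr_mult:
  assumes "\<forall>i. L$i$i > 0"
  shows "diag_powr L p *v (diag_powr L q *v x) = diag_powr L (p + q) *v x"
  using assms by (simp add: diag_powr_vec vec_eq_iff powr_add)

lemma diag_powr_inj:
  assumes "\<forall>i. L$i$i > 0" "diag_powr L p *v x = 0"
  shows "x = 0"
  using assms by (simp add: diag_powr_vec vec_eq_iff) (metis order_less_irrefl)

lemma Mnorm_R:
  assumes "\<forall>i. L$i$i > 0"
  shows "vec_Mnorm (diag_powr L (1/4)) x = norm (diag_powr L (1/8) *v x)"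
proof -
  have "diag_powr L (1/4) *v x = diag_powr L (1/8) *v (diag_powr L (1/8) *v x)"
    using diag_powr_mult[OF assms, of "1/8" "1/8" x] by simp
  then have "(diag_powr L (1/4) *v x) \<bullet> x = (diag_powr L (1/8) *v x) \<bullet> (diag_powr L (1/8) *v x)"
    by (simp add: dot_transpose diag_powr_transpose)
  then show ?thesis by (simp add: vec_Mnorm_def norm_eq_sqrt_inner)
qed

lemma ip_R:
  assumes "\<forall>i. L$i$i > 0"
  shows "(diag_powr L (1/8) *v a) \<bullet> (diag_powr L (1/8) *v b) = (diag_powr L (1/4) *v a) \<bullet> b"
proof -
  have "diag_powr L (1/4) *v a = diag_powr L (1/8) *v (diag_powr L (1/8) *v a)"
    using diag_powr_mult[OF assms, of "1/8" "1/8" a] by simp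
  then show ?thesis by (simp add: dot_transpose diag_powr_transpose)
qed

lemma posdef_inv:
  fixes G :: "real^'n^'n"
  assumes "sym_posdef G"
  shows "G ** matrix_inv G = mat 1 \<and> matrix_inv G ** G = mat 1"
proof -
  have "inj ((*v) G)"
  proof (rule injI)
    fix x y assume "G *v x = G *v y"
    then have "G *v (x - y) = 0" by (simp add: matrix_vector_mult_diff_distrib)
    then have "(G *v (x - y)) \<bullet> (x - y) = 0" by simp
    then show "x = y" using assms unfolding sym_posdef_def by (metis less_irrefl right_minus_eq)
  qed
  then obtain B where B: "B ** G = mat 1" using matrix_left_invertible_injective by blast
  then have GB: "G ** B = mat 1" using matrix_left_right_inverse by blast
  then have "matrix_inv G = B" by (rule inv_unique)
  then show ?thesis using B GB by simp
qed

lemma proj_props: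
  fixes W :: "real^'r^'n" and L :: "real^'n^'n"
  assumes Lpos: "\<forall>i. L$i$i > 0" and orth: "transpose W ** W = mat 1"
  defines "M \<equiv> diag_powr L (1/4)"
  defines "G \<equiv> transpose W ** M ** W"
  defines "Q \<equiv> W ** inv_sqrt G"
  defines "P \<equiv> Q ** transpose Q ** M"
  shows "\<And>x. P *v (P *v x) = P *v x"
    and "\<And>x y. (diag_powr L (1/8) *v (P *v x)) \<bullet> (diag_powr L (1/8) *v y)
               = (diag_powr L (1/8) *v x) \<bullet> (diag_powr L (1/8) *v (P *v y))"
    and "\<And>w. P *v (W *v w) = W *v w"
    and "dim (range (\<lambda>x. P *v x)) = CARD('r)"
    and "\<And>x. \<exists>w. P *v x = W *v w"
proof -
  have WtW: "transpose W *v (W *v w) = w" for w using orth by (simp add: matrix_vector_mul_assoc)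
  have symM: "transpose M = M" by (simp add: M_def diag_powr_transpose)
  have Gv: "G *v w = transpose W *v (M *v (W *v w))" for w
    by (simp add: G_def matrix_vector_mul_assoc matrix_mul_assoc)
  have symG: "transpose G = G" by (simp add: G_def matrix_transpose_mul symM matrix_mul_assoc)
  have pdG: "(G *v w) \<bullet> w > 0" if "w \<noteq> 0" for w
  proof -
    have Ww: "W *v w \<noteq> 0" using WtW[of w] that by auto
    have "(G *v w) \<bullet> w = (M *v (W *v w)) \<bullet> (W *v w)" unfolding Gv by (simp only: dot_transpose transpose_transpose)
    also have "\<dots> = (norm (diag_powr L (1/8) *v (W *v w)))^2"
      by (simp add: M_def ip_R[OF Lpos, symmetric] power2_norm_eq_inner)
    also have "\<dots> > 0" using diag_powr_inj[OF Lpos] Ww by auto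
    finally show ?thesis .
  qed
  have G: "sym_posdef G" using symG pdG by (simp add: sym_posdef_def)
  define S where "S = inv_sqrt G"
  define Gi where "Gi = matrix_inv G"
  have S: "sym_posdef S" "S ** S = Gi" using inv_sqrt_prop[OF G] by (simp_all add: S_def Gi_def)
  have symS: "transpose S = S" using S(1) by (simp add: sym_posdef_def)
  have Gi: "G ** Gi = mat 1" "Gi ** G = mat 1" using posdef_inv[OF G] by (simp_all add: Gi_def)
  have symGi: "transpose Gi = Gi" using S(2) symS by (metis matrix_transpose_mul)
  have Pv: "P *v x = W *v (Gi *v (transpose W *v (M *v x)))" for x
  proof -
    have "P = W ** (S ** S) ** transpose W ** M"
      using symS unfolding S_def by (simp add: P_def Q_def matrix_transpose_mul matrix_mul_assoc)
    then show ?thesis by (simp add: S(2) matrix_vector_mul_assoc matrix_mul_assoc)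
  qed
  show PW: "P *v (W *v w) = W *v w" for w
  proof -
    have "Gi *v (transpose W *v (M *v (W *v w))) = Gi *v (G *v w)" by (simp add: Gv)
    also have "\<dots> = w" using Gi(2) by (simp add: matrix_vector_mul_assoc)
    finally show ?thesis by (simp add: Pv)
  qed
  show "P *v (P *v x) = P *v x" for x
    using PW[of "Gi *v (transpose W *v (M *v x))"] by (simp add: Pv)
  show "(diag_powr L (1/8) *v (P *v x)) \<bullet> (diag_powr L (1/8) *v y)
               = (diag_powr L (1/8) *v x) \<bullet> (diag_powr L (1/8) *v (P *v y))" for x y
  proof -
    have "(diag_powr L (1/8) *v (P *v x)) \<bullet> (diag_powr L (1/8) *v y) = (M *v (P *v x)) \<bullet> y"
      by (simp add: ip_R[OF Lpos] M_def)
    also have "\<dots> = (P *v x) \<bullet> (M *v y)" by (simp add: dot_transpose symM)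
    also have "\<dots> = (Gi *v (transpose W *v (M *v x))) \<bullet> (transpose W *v (M *v y))"
      by (simp only: Pv dot_transpose)
    also have "\<dots> = (transpose W *v (M *v x)) \<bullet> (Gi *v (transpose W *v (M *v y)))"
      by (simp only: dot_transpose symGi)
    also have "\<dots> = (M *v x) \<bullet> (P *v y)" by (simp only: Pv dot_transpose transpose_transpose)
    also have "\<dots> = x \<bullet> (M *v (P *v y))" by (simp add: dot_transpose symM)
    also have "\<dots> = (M *v (P *v y)) \<bullet> x" by (rule inner_commute)
    also have "\<dots> = (diag_powr L (1/8) *v (P *v y)) \<bullet> (diag_powr L (1/8) *v x)"
      by (simp add: ip_R[OF Lpos] M_def)
    finally show ?thesis by (simp add: inner_commute)
  qed
  have "range (\<lambda>x. P *v x) = range (\<lambda>w. W *v w)"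
  proof
    show "range (\<lambda>x. P *v x) \<subseteq> range (\<lambda>w. W *v w)" by (auto simp: Pv)
    show "range (\<lambda>w. W *v w) \<subseteq> range (\<lambda>x. P *v x)"
    proof (rule image_subsetI)
      fix w show "W *v w \<in> range (\<lambda>x. P *v x)" using PW[of w] by (metis rangeI)
    qed
  qed
  then show "dim (range (\<lambda>x. P *v x)) = CARD('r)" using dim_range_mat[OF orth] by simp
  show "\<exists>w. P *v x = W *v w" for x using Pv by blast
qed


lemma contr:
  fixes R Pt :: "real^'n^'n"
  assumes Ptid: "\<And>x. Pt *v (Pt *v x) = Pt *v x"
    and Ptsa: "\<And>x y. (R *v (Pt *v x)) \<bullet> (R *v y) = (R *v x) \<bullet> (R *v (Pt *v y))"
  shows "norm (R *v (d - Pt *v d)) \<le> norm (R *v d)"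
proof -
  define a where "a = R *v (Pt *v d)"
  define b where "b = R *v (d - Pt *v d)"
  have ab: "R *v d = a + b" by (simp add: a_def b_def flip: matrix_vector_right_distrib)
  have "a \<bullet> b = (R *v d) \<bullet> (R *v (Pt *v (d - Pt *v d)))" unfolding a_def b_def by (rule Ptsa)
  also have "Pt *v (d - Pt *v d) = 0" by (simp add: matrix_vector_mult_diff_distrib Ptid)
  finally have o: "a \<bullet> b = 0" by simp
  have "(norm (R *v d))^2 = (norm a)^2 + (norm b)^2"
    unfolding ab by (rule norm_add_Pythagorean) (simp add: orthogonal_def o)
  then have "(norm b)^2 \<le> (norm (R *v d))^2" by simp
  then show ?thesis unfolding b_def by (rule power2_le_imp_le) simp
qed

lemma norm_le_comp:
  fixes a b :: "real^'n"
  assumes "\<And>i. \<bar>a$i\<bar> \<le> c * \<bar>b$i\<bar>" "c \<ge> 0"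
  shows "norm a \<le> c * norm b"
proof -
  have nsq: "(norm x)^2 = (\<Sum>i\<in>UNIV. (x$i)^2)" for x :: "real^'n"
    unfolding power2_norm_eq_inner inner_vec_def by (simp add: power2_eq_square)
  have "(norm a)^2 = (\<Sum>i\<in>UNIV. (a$i)^2)" by (rule nsq)
  also have "\<dots> \<le> (\<Sum>i\<in>UNIV. c^2 * (b$i)^2)"
  proof (rule sum_mono)
    fix i
    have "\<bar>a$i\<bar>^2 \<le> (c * \<bar>b$i\<bar>)^2" by (rule power_mono[OF assms(1)]) simp
    then show "(a$i)^2 \<le> c^2 * (b$i)^2" by (simp add: power_mult_distrib)
  qed
  also have "\<dots> = (c * norm b)^2"
    by (simp add: power_mult_distrib nsq sum_distrib_left)
  finally show ?thesis by (rule power2_le_imp_le) (simp add: assms(2))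
qed

lemma diag_mult:
  assumes "is_diagonal S"
  shows "S *v v = (\<chi> i. S$i$i * v$i)"
proof -
  have "(\<Sum>j\<in>UNIV. S$i$j * v$j) = S$i$i * v$i" for i
  proof -
    have "(\<Sum>j\<in>UNIV. S$i$j * v$j) = (\<Sum>j\<in>UNIV. if j = i then S$i$i * v$i else 0)"
      using assms by (intro sum.cong) (auto simp: is_diagonal_def)
    then show ?thesis by simp
  qed
  then show ?thesis by (simp add: matrix_vector_mult_def vec_eq_iff)
qed

lemma norm_orth: "transpose V ** V = mat 1 \<Longrightarrow> norm ((V::real^'r^'m) *v a) = norm a"
proof -
  assume o: "transpose V ** V = mat 1"
  have "(V *v a) \<bullet> (V *v a) = a \<bullet> a"
    by (simp only: dot_transpose matrix_vector_mul_assoc o matrix_vector_mul_lid)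
  then show ?thesis by (simp add: norm_eq_sqrt_inner)
qed

lemma ex_argmax: "\<exists>i. \<forall>j. (f::'a::finite \<Rightarrow> real) j \<le> f i"
proof -
  have "Max (range f) \<in> range f" by (rule Max_in) auto
  then obtain i where "f i = Max (range f)" by (metis rangeE)
  then show ?thesis by (metis Max_ge finite rangeI finite_imageI)
qed

lemma ex_argmin: "\<exists>i. \<forall>j. f i \<le> (f::'a::finite \<Rightarrow> real) j"
  using ex_argmax[of "\<lambda>i. - f i"] by auto



lemma sqrt_powr34: "a > 0 \<Longrightarrow> sqrt (a powr (3/4)) = a powr (3/8)"
proof -
  assume a: "a > 0"
  have "sqrt (a powr (3/4)) = (a powr (3/4)) powr (1/2)" by (simp add: powr_half_sqrt)
  also have "\<dots> = a powr (3/8)" by (simp add: powr_powr)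
  finally show ?thesis .
qed

lemma sv_diag:
  assumes Lpos: "\<forall>i. L$i$i > 0"
  shows "sing_vals (diag_powr L (3/8)) = range (\<lambda>i. L$i$i powr (3/8))"
proof -
  define N where "N = diag_powr L (3/8)"
  have NtN: "(transpose N ** N) *v v = (\<chi> i. L$i$i powr (3/4) * v$i)" for v
  proof -
    have "(transpose N ** N) *v v = N *v (N *v v)"
      by (simp only: N_def diag_powr_transpose matrix_vector_mul_assoc)
    also have "\<dots> = diag_powr L (3/8 + 3/8) *v v" unfolding N_def by (rule diag_powr_mult[OF Lpos])
    finally show ?thesis by (simp add: diag_powr_vec)
  qed
  show ?thesis
  proof
    show "sing_vals (diag_powr L (3/8)) \<subseteq> range (\<lambda>i. L$i$i powr (3/8))"
    proof
      fix x assume "x \<in> sing_vals (diag_powr L (3/8))"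
      then obtain e v where ev: "x = sqrt e" "e \<noteq> 0" "v \<noteq> 0" "(transpose N ** N) *v v = e *\<^sub>R v"
        unfolding sing_vals_def N_def by blast
      obtain i where vi: "v$i \<noteq> 0" using ev(3) by (auto simp: vec_eq_iff)
      have "((transpose N ** N) *v v)$i = L$i$i powr (3/4) * v$i" by (simp only: NtN vec_lambda_beta)
      moreover have "(e *\<^sub>R v)$i = e * v$i" by simp
      ultimately have "L$i$i powr (3/4) * v$i = e * v$i" using ev(4) by metis
      then have "e = L$i$i powr (3/4)" using vi by simp
      then have "x = L$i$i powr (3/8)" using ev(1) sqrt_powr34 Lpos by simp
      then show "x \<in> range (\<lambda>i. L$i$i powr (3/8))" by simp
    qed
    show "range (\<lambda>i. L$i$i powr (3/8)) \<subseteq> sing_vals (diag_powr L (3/8))"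
    proof
      fix x assume "x \<in> range (\<lambda>i. L$i$i powr (3/8))"
      then obtain i where xi: "x = L$i$i powr (3/8)" by blast
      define e where "e = L$i$i powr (3/4)"
      have "(transpose N ** N) *v axis i 1 = e *\<^sub>R axis i 1"
        by (simp add: NtN e_def vec_eq_iff axis_def)
      moreover have "e \<noteq> 0" using Lpos[rule_format, of i] by (simp add: e_def)
      moreover have "axis i (1::real) \<noteq> 0" by (simp add: axis_eq_0_iff)
      moreover have "x = sqrt e" using xi sqrt_powr34 Lpos by (simp add: e_def)
      ultimately show "x \<in> sing_vals (diag_powr L (3/8))" unfolding sing_vals_def N_def by blast
    qed
  qed
qed

lemma sv_X:
  fixes U :: "real^'r^'n1" and S :: "real^'r^'r" and V :: "real^'r^'n2"
  assumes U_orth: "transpose U ** U = mat 1" and V_orth: "transpose V ** V = mat 1"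
    and S_diag: "is_diagonal S" and S_pos: "\<forall>i. S $ i $ i > 0"
    and X: "X = U ** S ** transpose V"
  shows "sing_vals X = range (\<lambda>i. S$i$i)"
proof -
  have tSd: "is_diagonal (transpose S)" using S_diag by (simp add: is_diagonal_def transpose_def)
  have tS: "transpose S *v b = (\<chi> i. S$i$i * b$i)" for b
    using diag_mult[OF tSd] by (simp add: transpose_def)
  have Sv: "S *v b = (\<chi> i. S$i$i * b$i)" for b by (rule diag_mult[OF S_diag])
  have UtU: "transpose U *v (U *v a) = a" for a by (simp only: matrix_vector_mul_assoc U_orth matrix_vector_mul_lid)
  have VtV: "transpose V *v (V *v a) = a" for a by (simp only: matrix_vector_mul_assoc V_orth matrix_vector_mul_lid)
  have tX: "transpose X = V ** transpose S ** transpose U"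
    by (simp add: X matrix_transpose_mul matrix_mul_assoc)
  have XtX: "(transpose X ** X) *v v = V *v (\<chi> i. (S$i$i)^2 * (transpose V *v v)$i)" for v
  proof -
    have "(transpose X ** X) *v v = transpose X *v (X *v v)" by (simp only: matrix_vector_mul_assoc)
    also have "\<dots> = (V ** transpose S ** transpose U) *v ((U ** S ** transpose V) *v v)"
      by (subst tX) (subst X, rule refl)
    also have "\<dots> = V *v (transpose S *v (transpose U *v (U *v (S *v (transpose V *v v)))))"
      by (simp only: matrix_vector_mul_assoc[symmetric])
    also have "\<dots> = V *v (transpose S *v (S *v (transpose V *v v)))" by (simp only: UtU)
    also have "transpose S *v (S *v (transpose V *v v)) = (\<chi> i. (S$i$i)^2 * (transpose V *v v)$i)"
      by (simp only: tS Sv) (simp add: power2_eq_square mult.assoc)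
    finally show ?thesis .
  qed
  show ?thesis
  proof
    show "sing_vals X \<subseteq> range (\<lambda>i. S$i$i)"
    proof
      fix x assume "x \<in> sing_vals X"
      then obtain e v where ev: "x = sqrt e" "e \<noteq> 0" "v \<noteq> 0" "(transpose X ** X) *v v = e *\<^sub>R v"
        unfolding sing_vals_def by blast
      define u where "u = transpose V *v v"
      have Tu: "(\<chi> i. (S$i$i)^2 * u$i) = e *\<^sub>R u"
      proof -
        have "transpose V *v ((transpose X ** X) *v v) = (\<chi> i. (S$i$i)^2 * u$i)"
          unfolding XtX u_def by (rule VtV)
        then show ?thesis using ev(4) by (simp add: u_def matrix_vector_mult_scaleR)
      qed
      have "u \<noteq> 0"
      proof
        assume u0: "u = 0"
        have "(\<chi> i. (S$i$i)^2 * u$i) = 0" using u0 by (simp add: vec_eq_iff)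
        then have "(transpose X ** X) *v v = 0" by (simp only: XtX u_def[symmetric] matrix_vector_mult_0_right)
        then have "e *\<^sub>R v = 0" using ev(4) by simp
        then show False using ev(2,3) by simp
      qed
      then obtain i where ui: "u$i \<noteq> 0" by (auto simp: vec_eq_iff)
      have "(\<chi> i. (S$i$i)^2 * u$i)$i = (S$i$i)^2 * u$i" by (simp only: vec_lambda_beta)
      moreover have "(e *\<^sub>R u)$i = e * u$i" by simp
      ultimately have "(S$i$i)^2 * u$i = e * u$i" using Tu by metis
      then have "e = (S$i$i)^2" using ui by simp
      then have "x = S$i$i" using ev(1) S_pos by (simp add: less_imp_le)
      then show "x \<in> range (\<lambda>i. S$i$i)" by simp
    qed
    show "range (\<lambda>i. S$i$i) \<subseteq> sing_vals X"
    proof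
      fix x assume "x \<in> range (\<lambda>i. S$i$i)"
      then obtain i where xi: "x = S$i$i" by blast
      define e where "e = (S$i$i)^2"
      define v where "v = V *v axis i (1::real)"
      have inner: "(\<chi> j. (S$j$j)^2 * (axis i (1::real))$j) = e *\<^sub>R axis i 1"
        by (simp add: e_def vec_eq_iff axis_def)
      have "(transpose X ** X) *v v = V *v (e *\<^sub>R axis i 1)"
        unfolding XtX v_def VtV inner by (rule refl)
      also have "\<dots> = e *\<^sub>R v" by (simp add: v_def matrix_vector_mult_scaleR)
      finally have "(transpose X ** X) *v v = e *\<^sub>R v" .
      moreover have "e \<noteq> 0" using S_pos[rule_format, of i] by (simp add: e_def)
      moreover have "v \<noteq> 0"
      proof
        assume "v = 0"
        then have "transpose V *v v = 0" by (simp only: matrix_vector_mult_0_right)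
        then have "axis i (1::real) = 0" by (simp only: v_def VtV)
        then show False by (simp add: axis_eq_0_iff)
      qed
      moreover have "x = sqrt e" using xi S_pos by (simp add: e_def less_imp_le)
      ultimately show "x \<in> sing_vals X" unfolding sing_vals_def by blast
    qed
  qed
qed


theorem lemma3p6:
  fixes L :: "real^'n1^'n1"
    and Xt X :: "real^'n2^'n1"
    and Ut U :: "real^'r^'n1"
    and St S :: "real^'r^'r"
    and Vt V :: "real^'r^'n2"
  assumes L_diag: "is_diagonal L" and L_pos: "\<forall>i. L $ i $ i > 0"
    and rk_t: "rank Xt = CARD('r)" and rk: "rank X = CARD('r)"
    and svd_t: "Xt = Ut ** St ** transpose Vt"
    and svd: "X = U ** S ** transpose V"
    and Ut_orth: "transpose Ut ** Ut = mat 1" and U_orth: "transpose U ** U = mat 1"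
    and Vt_orth: "transpose Vt ** Vt = mat 1" and V_orth: "transpose V ** V = mat 1"
    and St_diag: "is_diagonal St" and St_pos: "\<forall>i. St $ i $ i > 0"
    and S_diag: "is_diagonal S" and S_pos: "\<forall>i. S $ i $ i > 0"
  shows
   "let L4 = diag_powr L (1/4);
        Utt = Ut ** inv_sqrt (transpose Ut ** L4 ** Ut);
        Utl = U ** inv_sqrt (transpose U ** L4 ** U)
    in mat_Mnorm L4 (Utt ** transpose Utt ** L4 - Utl ** transpose Utl ** L4)
       \<le> cond (diag_powr L (3/8)) / sigma_min X * spec_norm (Xt - X)"
proof -
  define M where "M = diag_powr L (1/4)"
  define R where "R = diag_powr L (1/8)"
  define N where "N = diag_powr L (3/8)"
  define Utt where "Utt = Ut ** inv_sqrt (transpose Ut ** M ** Ut)"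
  define Utl where "Utl = U ** inv_sqrt (transpose U ** M ** U)"
  define Pt where "Pt = Utt ** transpose Utt ** M"
  define P where "P = Utl ** transpose Utl ** M"
  define spec where "spec = spec_norm (Xt - X)"
  define K where "K = cond N / sigma_min X * spec"
  have Pid: "P *v (P *v x) = P *v x" for x
    unfolding P_def Utl_def M_def by (rule proj_props(1)[OF L_pos U_orth])
  have Psa: "(R *v (P *v x)) \<bullet> (R *v y) = (R *v x) \<bullet> (R *v (P *v y))" for x y
    unfolding P_def Utl_def M_def R_def by (rule proj_props(2)[OF L_pos U_orth])
  have Pdim: "dim (range (\<lambda>x. P *v x)) = CARD('r)"
    unfolding P_def Utl_def M_def by (rule proj_props(4)[OF L_pos U_orth])
  have Prange: "\<exists>w. P *v x = U *v w" for x
    unfolding P_def Utl_def M_def by (rule proj_props(5)[OF L_pos U_orth])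
  have Ptid: "Pt *v (Pt *v x) = Pt *v x" for x
    unfolding Pt_def Utt_def M_def by (rule proj_props(1)[OF L_pos Ut_orth])
  have Ptsa: "(R *v (Pt *v x)) \<bullet> (R *v y) = (R *v x) \<bullet> (R *v (Pt *v y))" for x y
    unfolding Pt_def Utt_def M_def R_def by (rule proj_props(2)[OF L_pos Ut_orth])
  have PtW: "Pt *v (Ut *v w) = Ut *v w" for w
    unfolding Pt_def Utt_def M_def by (rule proj_props(3)[OF L_pos Ut_orth])
  have Ptdim: "dim (range (\<lambda>x. Pt *v x)) = CARD('r)"
    unfolding Pt_def Utt_def M_def by (rule proj_props(4)[OF L_pos Ut_orth])
  obtain imax where imax: "\<forall>j. L$j$j \<le> L$imax$imax" using ex_argmax[of "\<lambda>i. L$i$i"] by blast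
  obtain imin where imin: "\<forall>j. L$imin$imin \<le> L$j$j" using ex_argmin[of "\<lambda>i. L$i$i"] by blast
  obtain jmin where jmin: "\<forall>j. S$jmin$jmin \<le> S$j$j" using ex_argmin[of "\<lambda>i. S$i$i"] by blast
  define lmax where "lmax = L$imax$imax"
  define lmin where "lmin = L$imin$imin"
  define smin where "smin = S$jmin$jmin"
  have lminp: "lmin > 0" using L_pos by (simp add: lmin_def)
  have lmaxp: "lmax > 0" using L_pos by (simp add: lmax_def)
  have sminp: "smin > 0" using S_pos by (simp add: smin_def)
  have lle: "lmin \<le> lmax" using imax by (simp add: lmin_def lmax_def)
  define rmax where "rmax = lmax powr (1/8)"
  define rmin where "rmin = lmin powr (1/8)"
  have rminp: "rmin > 0" using lminp by (simp add: rmin_def)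
  have sigX: "sigma_min X = smin"
    unfolding sigma_min_def sv_X[OF U_orth V_orth S_diag S_pos svd]
    by (rule cInf_eq_minimum) (auto simp: smin_def jmin)
  have sigmaxN: "sigma_max N = lmax powr (3/8)"
    unfolding sigma_max_def N_def sv_diag[OF L_pos]
    by (rule cSup_eq_maximum) (auto simp: lmax_def imax intro!: powr_mono2 less_imp_le[OF L_pos[rule_format]])
  have sigminN: "sigma_min N = lmin powr (3/8)"
    unfolding sigma_min_def N_def sv_diag[OF L_pos]
    by (rule cInf_eq_minimum) (auto simp: lmin_def imin intro!: powr_mono2 less_imp_le[OF L_pos[rule_format]])
  have condN: "cond N = lmax powr (3/8) / lmin powr (3/8)"
    by (simp add: cond_def sigmaxN sigminN)
  have ratio: "rmax / rmin \<le> cond N"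
  proof -
    have q: "lmax / lmin \<ge> 1" using lle lminp by simp
    have "rmax / rmin = (lmax / lmin) powr (1/8)"
      using lminp lmaxp by (simp add: rmax_def rmin_def powr_divide)
    also have "\<dots> \<le> (lmax / lmin) powr (3/8)" by (rule powr_mono) (use q in auto)
    also have "\<dots> = cond N" using lminp lmaxp by (simp add: condN powr_divide)
    finally show ?thesis .
  qed
  have bl: "bounded_linear (\<lambda>x. (Xt - X) *v x)"
    using linear_conv_bounded_linear matrix_vector_mul_linear by blast
  have specp: "spec \<ge> 0" unfolding spec_def spec_norm_def by (rule onorm_pos_le[OF bl])
  have specb: "norm ((Xt - X) *v y) \<le> spec * norm y" for y
    unfolding spec_def spec_norm_def using onorm[OF bl] by simp
  have condp: "cond N \<ge> 0" using ratio rminp rmax_def by (smt (verit) divide_nonneg_pos powr_ge_zero)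
  have Kp: "K \<ge> 0" using condp sminp specp by (simp add: K_def sigX)
  have RD: "R *v x = (\<chi> i. L$i$i powr (1/8) * x$i)" for x by (simp add: R_def diag_powr_vec)
  have Rup: "norm (R *v x) \<le> rmax * norm x" for x
  proof (rule norm_le_comp)
    fix i
    have "L$i$i powr (1/8) \<le> rmax" unfolding rmax_def lmax_def
      using imax L_pos by (intro powr_mono2) (auto intro: less_imp_le)
    then show "\<bar>(R *v x)$i\<bar> \<le> rmax * \<bar>x$i\<bar>" by (simp add: RD abs_mult mult_right_mono)
  qed (simp add: rmax_def)
  have Rlow: "norm x \<le> (1/rmin) * norm (R *v x)" for x
  proof (rule norm_le_comp)
    fix i
    have a: "rmin \<le> L$i$i powr (1/8)" unfolding rmin_def lmin_def
      using imin lminp by (intro powr_mono2) (auto simp: lmin_def intro: less_imp_le)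
    have "rmin * \<bar>x$i\<bar> \<le> L$i$i powr (1/8) * \<bar>x$i\<bar>" by (rule mult_right_mono[OF a]) simp
    then show "\<bar>x$i\<bar> \<le> (1/rmin) * \<bar>(R *v x)$i\<bar>" using rminp
      by (simp add: RD abs_mult field_simps)
  qed (use rminp in simp)
  have Rinj: "R *v x = 0 \<Longrightarrow> x = 0" for x unfolding R_def by (rule diag_powr_inj[OF L_pos])
  have beta: "norm (R *v (P *v z - Pt *v (P *v z))) \<le> K * norm (R *v (P *v z))" for z
  proof -
    obtain w where w: "P *v z = U *v w" using Prange by blast
    define c where "c = (\<chi> i. w$i / S$i$i)"
    define y where "y = V *v c"
    have Xy: "X *v y = U *v w"
    proof -
      have "X *v y = U *v (S *v (transpose V *v (V *v c)))"
        by (simp only: svd y_def matrix_vector_mul_assoc[symmetric])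
      also have "transpose V *v (V *v c) = c"
        by (simp only: matrix_vector_mul_assoc V_orth matrix_vector_mul_lid)
      also have "S *v c = w" using S_pos by (simp add: diag_mult[OF S_diag] c_def vec_eq_iff) (metis less_irrefl)
      finally show ?thesis .
    qed
    have Xty: "Pt *v (Xt *v y) = Xt *v y"
    proof -
      have "Xt *v y = Ut *v (St *v (transpose Vt *v y))" by (simp only: svd_t matrix_vector_mul_assoc[symmetric])
      then show ?thesis using PtW by metis
    qed
    define d where "d = (X - Xt) *v y"
    have eq: "P *v z - Pt *v (P *v z) = d - Pt *v d"
    proof -
      have Pz: "P *v z = d + Xt *v y" by (simp add: d_def w Xy matrix_vector_mult_diff_rdistrib)
      have "Pt *v (P *v z) = Pt *v d + Xt *v y" by (simp only: Pz matrix_vector_right_distrib Xty)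
      then show ?thesis using Pz by simp
    qed
    define A where "A = norm (R *v (P *v z))"
    have h1: "norm (R *v (d - Pt *v d)) \<le> rmax * norm d"
      using contr[OF Ptid Ptsa, of d] Rup[of d] by linarith
    have nd: "norm d = norm ((Xt - X) *v y)"
    proof -
      have "d = - ((Xt - X) *v y)" by (simp add: d_def matrix_vector_mult_diff_rdistrib)
      then show ?thesis by simp
    qed
    have h2: "norm d \<le> spec * norm y" using specb[of y] nd by simp
    have "norm y = norm c" by (simp only: y_def norm_orth[OF V_orth])
    also have "norm c \<le> (1/smin) * norm w"
    proof (rule norm_le_comp)
      fix i
      have si: "S$i$i \<ge> smin" using jmin by (simp add: smin_def)
      have "\<bar>w$i\<bar> / S$i$i \<le> \<bar>w$i\<bar> / smin" by (rule divide_left_mono) (use si sminp in auto)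
      then show "\<bar>c$i\<bar> \<le> (1/smin) * \<bar>w$i\<bar>" using S_pos[rule_format, of i]
        by (simp add: c_def abs_div)
    qed (use sminp in simp)
    finally have h3: "norm y \<le> (1/smin) * norm w" .
    have "norm w = norm (P *v z)" by (simp only: w norm_orth[OF U_orth])
    also have "norm (P *v z) \<le> (1/rmin) * A" unfolding A_def by (rule Rlow)
    finally have h4: "norm w \<le> (1/rmin) * A" .
    have h34: "norm y \<le> (1/smin) * ((1/rmin) * A)"
      using h3 mult_left_mono[OF h4, of "1/smin"] sminp by simp
    have h234: "norm d \<le> spec * ((1/smin) * ((1/rmin) * A))"
      using h2 mult_left_mono[OF h34 specp] by simp
    have rmaxp: "rmax \<ge> 0" by (simp add: rmax_def)
    have b1: "norm (R *v (d - Pt *v d)) \<le> rmax * (spec * ((1/smin) * ((1/rmin) * A)))"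
      using h1 mult_left_mono[OF h234 rmaxp] by simp
    have "rmax * (spec * ((1/smin) * ((1/rmin) * A))) = (rmax / rmin) * (spec / smin) * A" by (simp add: mult_ac)
    also have "\<dots> \<le> cond N * (spec / smin) * A"
      by (rule mult_right_mono[OF mult_right_mono[OF ratio]]) (use specp sminp in \<open>auto simp: A_def\<close>)
    also have "\<dots> = K * A" by (simp add: K_def sigX)
    finally show ?thesis using b1 eq by (simp add: A_def)
  qed
  have main: "norm (R *v (Pt *v x - P *v x)) \<le> K * norm (R *v x)" for x
  proof -
    have dims: "dim (range (\<lambda>x. P *v x)) = dim (range (\<lambda>x. Pt *v x))" using Pdim Ptdim by simp
    show ?thesis by (rule main_abstract[of R P Pt K x, OF Rinj Pid Ptid Psa Ptsa dims Kp beta])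
  qed
  have final: "mat_Mnorm M (Pt - P) \<le> K"
    unfolding mat_Mnorm_def
  proof (rule cSUP_least)
    obtain i :: 'n1 where True by blast
    have "axis i (1::real) \<noteq> 0" by (simp add: axis_eq_0_iff)
    then show "{x::real^'n1. x \<noteq> 0} \<noteq> {}" by blast
  next
    fix x :: "real^'n1" assume "x \<in> {x. x \<noteq> 0}"
    then have "x \<noteq> 0" by simp
    then have pos: "norm (R *v x) > 0" using Rinj by auto
    have "vec_Mnorm M ((Pt - P) *v x) = norm (R *v (Pt *v x - P *v x))"
      by (simp add: M_def R_def Mnorm_R[OF L_pos] matrix_vector_mult_diff_rdistrib)
    moreover have "vec_Mnorm M x = norm (R *v x)" by (simp add: M_def R_def Mnorm_R[OF L_pos])
    ultimately show "vec_Mnorm M ((Pt - P) *v x) / vec_Mnorm M x \<le> K"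
      using main[of x] pos by (simp add: pos_divide_le_eq)
  qed
  show ?thesis unfolding Let_def using final
    by (simp only: M_def N_def Pt_def P_def Utt_def Utl_def K_def spec_def)
qed

end
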